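(* Let $G$ be a concurrent game structure, $T\subseteq S$, with all states of $T\cup W_2$ absorbing. Let $\xi_1^{\mathrm{unif}}$ be the player-1 selector that at every state $s\in S\setminus(T\cup W_2)$ chooses all moves in $\Gamma_1(s)$ uniformly at random. Then $\xi_1^{\mathrm{unif}}$ is proper.
   Context: Concurrent game structure $G=(S,M,\Gamma_1,\Gamma_2,\delta)$: finite states $S$, finite moves $M$, nonempty move sets $\Gamma_i(s)\subseteq M$, transition probabilities $\delta(s,a_1,a_2)\in\mathrm{Distr}(S)$ (moves chosen simultaneously and independently). A state is absorbing if every move pair leads back to it with probability 1. A selector for player $i$ assigns to each state $s$ a distribution on $\Gamma_i(s)$; $\overline{\xi}$ is the memoryless strategy playing $\xi$ at every step. $\Pr_s^{\pi_1,\pi_2}$ is the measure on plays from $s$ induced by strategies $\pi_1,\pi_2$. $\mathrm{Reach}(X)$: plays visiting $X$. $\mathrm{val}_1(\mathrm{Reach}(T))(s)=\sup_{\pi_1}\inf_{\pi_2}\Pr_s^{\pi_1,\pi_2}(\mathrm{Reach}(T))$, $W_2=\{s:\mathrm{val}_1(\mathrm{Reach}(T))(s)=0\}$. A player-1 strategy $\pi_1$ is proper if for every player-2 strategy $\pi_2$ and all $s\in S\setminus(T\cup W_2)$, $\Pr_s^{\pi_1,\pi_2}(\mathrm{Reach}(T\cup W_2))=1$; a selector $\xi_1$ is proper if $\overline{\xi}_1$ is proper. *)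

theory Defs
  imports "HOL-Probability.Probability"
begin

definition cgs :: "('s::finite \<Rightarrow> 'm::finite set) \<Rightarrow> ('s \<Rightarrow> 'm set) \<Rightarrow> ('s \<Rightarrow> 'm \<Rightarrow> 'm \<Rightarrow> 's pmf) \<Rightarrow> bool" where
  "cgs G1 G2 delta \<longleftrightarrow> (\<forall>s. G1 s \<noteq> {} \<and> G2 s \<noteq> {})"

definition absorbing :: "('s \<Rightarrow> 'm set) \<Rightarrow> ('s \<Rightarrow> 'm set) \<Rightarrow> ('s \<Rightarrow> 'm \<Rightarrow> 'm \<Rightarrow> 's pmf) \<Rightarrow> 's \<Rightarrow> bool" where
  "absorbing G1 G2 delta s \<longleftrightarrow> (\<forall>a1\<in>G1 s. \<forall>a2\<in>G2 s. delta s a1 a2 = return_pmf s)"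

definition strategies :: "('s \<Rightarrow> 'm set) \<Rightarrow> ('s list \<Rightarrow> 'm pmf) set" where
  "strategies G = {\<pi>. \<forall>h. h \<noteq> [] \<longrightarrow> set_pmf (\<pi> h) \<subseteq> G (last h)}"

definition selector :: "('s \<Rightarrow> 'm set) \<Rightarrow> ('s \<Rightarrow> 'm pmf) \<Rightarrow> bool" where
  "selector G \<xi> \<longleftrightarrow> (\<forall>s. set_pmf (\<xi> s) \<subseteq> G s)"

definition memoryless :: "('s \<Rightarrow> 'm pmf) \<Rightarrow> ('s list \<Rightarrow> 'm pmf)" where
  "memoryless \<xi> = (\<lambda>h. \<xi> (last h))"

text \<open>Distribution of the first n+1 states of the play from s under strategies p1, p2
  (moves chosen simultaneously and independently).\<close>

primrec hist_pmf :: "('s \<Rightarrow> 'm \<Rightarrow> 'm \<Rightarrow> 's pmf) \<Rightarrow> ('s list \<Rightarrow> 'm pmf) \<Rightarrow> ('s list \<Rightarrow> 'm pmf)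
    \<Rightarrow> 's \<Rightarrow> nat \<Rightarrow> 's list pmf" where
  "hist_pmf delta p1 p2 s 0 = return_pmf [s]"
| "hist_pmf delta p1 p2 s (Suc n) =
     do { h \<leftarrow> hist_pmf delta p1 p2 s n;
          a1 \<leftarrow> p1 h; a2 \<leftarrow> p2 h;
          t \<leftarrow> delta (last h) a1 a2;
          return_pmf (h @ [t]) }"

text \<open>Pr_s^{p1,p2}(Reach X): the measure of the plays visiting X, computed as the limit
  (supremum) of the probabilities of the increasing events "X is visited within n steps".\<close>

definition prob_reach :: "('s \<Rightarrow> 'm \<Rightarrow> 'm \<Rightarrow> 's pmf) \<Rightarrow> ('s list \<Rightarrow> 'm pmf) \<Rightarrow> ('s list \<Rightarrow> 'm pmf)
    \<Rightarrow> 's \<Rightarrow> 's set \<Rightarrow> real" where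
  "prob_reach delta p1 p2 s X =
     (SUP n. measure_pmf.prob (hist_pmf delta p1 p2 s n) {h. set h \<inter> X \<noteq> {}})"

definition val1 :: "('s \<Rightarrow> 'm set) \<Rightarrow> ('s \<Rightarrow> 'm set) \<Rightarrow> ('s \<Rightarrow> 'm \<Rightarrow> 'm \<Rightarrow> 's pmf) \<Rightarrow> 's set \<Rightarrow> 's \<Rightarrow> real" where
  "val1 G1 G2 delta T s =
     (SUP p1 \<in> strategies G1. INF p2 \<in> strategies G2. prob_reach delta p1 p2 s T)"

definition W2 :: "('s \<Rightarrow> 'm set) \<Rightarrow> ('s \<Rightarrow> 'm set) \<Rightarrow> ('s \<Rightarrow> 'm \<Rightarrow> 'm \<Rightarrow> 's pmf) \<Rightarrow> 's set \<Rightarrow> 's set" where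
  "W2 G1 G2 delta T = {s. val1 G1 G2 delta T s = 0}"

definition proper_strategy :: "('s \<Rightarrow> 'm set) \<Rightarrow> ('s \<Rightarrow> 'm set) \<Rightarrow> ('s \<Rightarrow> 'm \<Rightarrow> 'm \<Rightarrow> 's pmf) \<Rightarrow> 's set
    \<Rightarrow> ('s list \<Rightarrow> 'm pmf) \<Rightarrow> bool" where
  "proper_strategy G1 G2 delta T p1 \<longleftrightarrow>
     (\<forall>p2 \<in> strategies G2. \<forall>s. s \<notin> T \<union> W2 G1 G2 delta T \<longrightarrow>
        prob_reach delta p1 p2 s (T \<union> W2 G1 G2 delta T) = 1)"

definition proper_selector :: "('s \<Rightarrow> 'm set) \<Rightarrow> ('s \<Rightarrow> 'm set) \<Rightarrow> ('s \<Rightarrow> 'm \<Rightarrow> 'm \<Rightarrow> 's pmf) \<Rightarrow> 's set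
    \<Rightarrow> ('s \<Rightarrow> 'm pmf) \<Rightarrow> bool" where
  "proper_selector G1 G2 delta T \<xi> \<longleftrightarrow> proper_strategy G1 G2 delta T (memoryless \<xi>)"

end

theory Submission
  imports Defs
begin

definition stp :: "('s \<Rightarrow> 'm \<Rightarrow> 'm \<Rightarrow> 's pmf) \<Rightarrow> ('s list \<Rightarrow> 'm pmf) \<Rightarrow> ('s list \<Rightarrow> 'm pmf) \<Rightarrow> 's list \<Rightarrow> 's list pmf" where
  "stp delta p1 p2 h = do { a1 \<leftarrow> p1 h; a2 \<leftarrow> p2 h; t \<leftarrow> delta (last h) a1 a2; return_pmf (h @ [t]) }"

primrec hfrom :: "('s \<Rightarrow> 'm \<Rightarrow> 'm \<Rightarrow> 's pmf) \<Rightarrow> ('s list \<Rightarrow> 'm pmf) \<Rightarrow> ('s list \<Rightarrow> 'm pmf) \<Rightarrow> 's list \<Rightarrow> nat \<Rightarrow> 's list pmf" where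
  "hfrom delta p1 p2 h 0 = return_pmf h"
| "hfrom delta p1 p2 h (Suc n) = bind_pmf (hfrom delta p1 p2 h n) (stp delta p1 p2)"

lemma hist_eq: "hist_pmf delta p1 p2 s n = hfrom delta p1 p2 [s] n"
  by (induction n) (simp_all add: stp_def[abs_def])

lemma hfrom_add: "hfrom delta p1 p2 h (m + n) = bind_pmf (hfrom delta p1 p2 h m) (\<lambda>h'. hfrom delta p1 p2 h' n)"
  by (induction n) (simp_all add: bind_return_pmf' bind_assoc_pmf)

lemma hfrom_Suc': "hfrom delta p1 p2 h (Suc n) = bind_pmf (stp delta p1 p2 h) (\<lambda>h'. hfrom delta p1 p2 h' n)"
  using hfrom_add[of delta p1 p2 h 1 n] by (simp add: bind_return_pmf)

lemma hfrom_set: "h' \<in> set_pmf (hfrom delta p1 p2 h n) \<Longrightarrow> \<exists>ys. h' = h @ ys"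
  by (induction n arbitrary: h') (auto simp: stp_def, metis append_assoc)

definition Hit :: "'s set \<Rightarrow> 's list set" where "Hit X = {h. set h \<inter> X \<noteq> {}}"

lemma hit_one: "set h \<inter> X \<noteq> {} \<Longrightarrow> emeasure (measure_pmf (hfrom delta p1 p2 h n)) (Hit X) = 1"
proof -
  assume a: "set h \<inter> X \<noteq> {}"
  have "AE x in measure_pmf (hfrom delta p1 p2 h n). x \<in> Hit X"
    using a by (auto simp: AE_measure_pmf_iff Hit_def dest!: hfrom_set)
  then show ?thesis by (simp add: measure_pmf.emeasure_eq_1_AE)
qed

lemma hit_zero: "set h \<inter> X \<noteq> {} \<Longrightarrow> emeasure (measure_pmf (hfrom delta p1 p2 h n)) (- Hit X) = 0"
  by (auto simp: measure_pmf.emeasure_eq_measure measure_pmf_zero_iff Hit_def dest!: hfrom_set)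

lemma stp_set: "h' \<in> set_pmf (stp delta p1 p2 h) \<Longrightarrow> \<exists>t. h' = h @ [t]"
  by (auto simp: stp_def)

lemma lemA:
  fixes q :: real
  assumes X: "Att 0 = X" and q: "0 \<le> q" "q \<le> 1"
    and st: "\<And>h k. h \<noteq> [] \<Longrightarrow> last h \<in> Att (Suc k) \<Longrightarrow> last h \<notin> X \<Longrightarrow>
        ennreal q \<le> emeasure (measure_pmf (stp delta p1 p2 h)) {h'. last h' \<in> Att k}"
  shows "h \<noteq> [] \<Longrightarrow> last h \<in> Att k \<Longrightarrow> ennreal (q ^ k) \<le> emeasure (measure_pmf (hfrom delta p1 p2 h k)) (Hit X)"
proof (induction k arbitrary: h)
  case 0
  then have "set h \<inter> X \<noteq> {}" using X last_in_set by fastforce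
  then show ?case by (simp add: Hit_def)
next
  case (Suc k)
  show ?case
  proof (cases "last h \<in> X")
    case True
    then have "set h \<inter> X \<noteq> {}" using Suc.prems last_in_set by fastforce
    then have "emeasure (measure_pmf (hfrom delta p1 p2 h (Suc k))) (Hit X) = 1" by (rule hit_one)
    then show ?thesis using q by (simp add: power_le_one del: power_Suc)
  next
    case False
    let ?B = "{h'. last h' \<in> Att k}"
    have "ennreal (q ^ Suc k) = ennreal (q ^ k) * ennreal q"
      using q by (simp add: ennreal_mult mult.commute)
    also have "\<dots> \<le> ennreal (q ^ k) * emeasure (measure_pmf (stp delta p1 p2 h)) ?B"
      using st[OF Suc.prems(1) Suc.prems(2) False] by (intro mult_left_mono) auto
    also have "\<dots> = (\<integral>\<^sup>+h'. ennreal (q ^ k) * indicator ?B h' \<partial>measure_pmf (stp delta p1 p2 h))"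
      by (simp add: nn_integral_cmult_indicator)
    also have "\<dots> \<le> (\<integral>\<^sup>+h'. emeasure (measure_pmf (hfrom delta p1 p2 h' k)) (Hit X) \<partial>measure_pmf (stp delta p1 p2 h))"
    proof (intro nn_integral_mono_AE)
      show "AE h' in measure_pmf (stp delta p1 p2 h). ennreal (q ^ k) * indicator ?B h' \<le> emeasure (measure_pmf (hfrom delta p1 p2 h' k)) (Hit X)"
        unfolding AE_measure_pmf_iff
      proof (intro ballI)
        fix h' assume "h' \<in> set_pmf (stp delta p1 p2 h)"
        then have "h' \<noteq> []" using stp_set by fastforce
        then show "ennreal (q ^ k) * indicator ?B h' \<le> emeasure (measure_pmf (hfrom delta p1 p2 h' k)) (Hit X)"
          using Suc.IH[of h'] by (auto split: split_indicator)
      qed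
    qed
    also have "\<dots> = emeasure (measure_pmf (hfrom delta p1 p2 h (Suc k))) (Hit X)"
      by (simp only: hfrom_Suc' emeasure_bind_pmf)
    finally show ?thesis .
  qed
qed

lemma lemB:
  fixes r :: real
  assumes r: "0 \<le> r" "r \<le> 1"
    and A: "\<And>h. h \<noteq> [] \<Longrightarrow> ennreal r \<le> emeasure (measure_pmf (hfrom delta p1 p2 h N)) (Hit X)"
  shows "h \<noteq> [] \<Longrightarrow> emeasure (measure_pmf (hfrom delta p1 p2 h (j * N))) (- Hit X) \<le> ennreal ((1 - r) ^ j)"
proof (induction j arbitrary: h)
  case 0
  then show ?case by (simp split: split_indicator)
next
  case (Suc j)
  let ?M = "measure_pmf (hfrom delta p1 p2 h N)"
  have "emeasure (measure_pmf (hfrom delta p1 p2 h (Suc j * N))) (- Hit X)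
      = (\<integral>\<^sup>+h'. emeasure (measure_pmf (hfrom delta p1 p2 h' (j * N))) (- Hit X) \<partial>?M)"
    by (simp add: hfrom_add)
  also have "\<dots> \<le> (\<integral>\<^sup>+h'. ennreal ((1 - r) ^ j) * indicator (- Hit X) h' \<partial>?M)"
  proof (intro nn_integral_mono_AE)
    show "AE h' in ?M. emeasure (measure_pmf (hfrom delta p1 p2 h' (j * N))) (- Hit X) \<le> ennreal ((1 - r) ^ j) * indicator (- Hit X) h'"
      unfolding AE_measure_pmf_iff
    proof (intro ballI)
      fix h' assume "h' \<in> set_pmf (hfrom delta p1 p2 h N)"
      then have "h' \<noteq> []" using hfrom_set[of h'] Suc.prems by fastforce
      show "emeasure (measure_pmf (hfrom delta p1 p2 h' (j * N))) (- Hit X) \<le> ennreal ((1 - r) ^ j) * indicator (- Hit X) h'"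
      proof (cases "h' \<in> Hit X")
        case True
        then show ?thesis using hit_zero[of h' X] by (simp add: Hit_def)
      next
        case False
        then show ?thesis using Suc.IH[OF \<open>h' \<noteq> []\<close>] by simp
      qed
    qed
  qed
  also have "\<dots> = ennreal ((1 - r) ^ j) * emeasure ?M (- Hit X)"
    by (simp add: nn_integral_cmult_indicator)
  also have "\<dots> \<le> ennreal ((1 - r) ^ j) * ennreal (1 - r)"
  proof (intro mult_left_mono)
    have "measure ?M (- Hit X) = 1 - measure ?M (Hit X)"
      using measure_pmf.prob_compl[of "Hit X" "hfrom delta p1 p2 h N"] by (simp add: Compl_eq_Diff_UNIV)
    moreover have "r \<le> measure ?M (Hit X)"
      using A[OF Suc.prems] by (simp add: measure_pmf.emeasure_eq_measure)
    ultimately show "emeasure ?M (- Hit X) \<le> ennreal (1 - r)"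
      by (simp add: measure_pmf.emeasure_eq_measure ennreal_leI)
  qed auto
  also have "\<dots> = ennreal ((1 - r) ^ Suc j)"
    using r by (simp add: ennreal_mult[symmetric] mult.commute)
  finally show ?case .
qed

primrec Att :: "('s \<Rightarrow> 'm set) \<Rightarrow> ('s \<Rightarrow> 'm set) \<Rightarrow> ('s \<Rightarrow> 'm \<Rightarrow> 'm \<Rightarrow> 's pmf) \<Rightarrow> 's set \<Rightarrow> nat \<Rightarrow> 's set" where
  "Att G1 G2 delta X 0 = X"
| "Att G1 G2 delta X (Suc k) = X \<union> {s. \<forall>a2\<in>G2 s. \<exists>a1\<in>G1 s. set_pmf (delta s a1 a2) \<inter> Att G1 G2 delta X k \<noteq> {}}"

lemma Att_Suc_mono: "Att G1 G2 delta X k \<subseteq> Att G1 G2 delta X (Suc k)"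
proof (induction k)
  case 0 then show ?case by auto
next
  case (Suc k)
  have "{s. \<forall>a2\<in>G2 s. \<exists>a1\<in>G1 s. set_pmf (delta s a1 a2) \<inter> Att G1 G2 delta X k \<noteq> {}}
     \<subseteq> {s. \<forall>a2\<in>G2 s. \<exists>a1\<in>G1 s. set_pmf (delta s a1 a2) \<inter> Att G1 G2 delta X (Suc k) \<noteq> {}}"
    using Suc.IH by blast
  then show ?case by (simp only: Att.simps(2)[of _ _ _ _ "Suc k"] Att.simps(2)[of _ _ _ _ k]) blast
qed

lemma Att_mono: "k \<le> l \<Longrightarrow> Att G1 G2 delta X k \<subseteq> Att G1 G2 delta X l"
  by (rule lift_Suc_mono_le[of "Att G1 G2 delta X", OF Att_Suc_mono])

lemma chain_stab:
  fixes f :: "nat \<Rightarrow> 's::finite set"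
  assumes "\<And>k. f k \<subseteq> f (Suc k)"
  shows "\<exists>k \<le> CARD('s). f k = f (Suc k)"
proof (rule ccontr)
  assume "\<not> ?thesis"
  then have ps: "\<And>k. k \<le> CARD('s) \<Longrightarrow> f k \<subset> f (Suc k)" using assms by blast
  have "k \<le> Suc (CARD('s)) \<Longrightarrow> k \<le> card (f k)" for k
  proof (induction k)
    case 0 then show ?case by simp
  next
    case (Suc k)
    then have "card (f k) < card (f (Suc k))"
      using ps[of k] by (intro psubset_card_mono) auto
    then show ?case using Suc by simp
  qed
  from this[of "Suc (CARD('s))"] have "Suc (CARD('s)) \<le> card (f (Suc (CARD('s))))" by simp
  moreover have "card (f (Suc (CARD('s)))) \<le> CARD('s)" by (rule card_mono) auto
  ultimately show False by simp
qed

lemma Att_full: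
  fixes X :: "'s::finite set"
  assumes trap: "\<And>Z. Z \<inter> X = {} \<Longrightarrow> (\<forall>s\<in>Z. \<exists>a2\<in>G2 s. \<forall>a1\<in>G1 s. set_pmf (delta s a1 a2) \<subseteq> Z) \<Longrightarrow> Z = {}"
  shows "Att G1 G2 delta X (CARD('s)) = UNIV"
proof -
  obtain k where k: "k \<le> CARD('s)" "Att G1 G2 delta X k = Att G1 G2 delta X (Suc k)"
    using chain_stab[of "Att G1 G2 delta X", OF Att_Suc_mono] by blast
  let ?Z = "- Att G1 G2 delta X k"
  have "?Z \<inter> X = {}" using Att_mono[of 0 k G1 G2 delta X] by auto
  moreover have "\<forall>s\<in>?Z. \<exists>a2\<in>G2 s. \<forall>a1\<in>G1 s. set_pmf (delta s a1 a2) \<subseteq> ?Z"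
  proof
    fix s assume "s \<in> ?Z"
    then have "s \<notin> Att G1 G2 delta X (Suc k)" using k(2) by (metis ComplD)
    then show "\<exists>a2\<in>G2 s. \<forall>a1\<in>G1 s. set_pmf (delta s a1 a2) \<subseteq> ?Z" by auto
  qed
  ultimately have "?Z = {}" by (rule trap)
  then show ?thesis using Att_mono[OF k(1), of G1 G2 delta X] by auto
qed

lemma prob_reach_bounds: "0 \<le> prob_reach delta p1 p2 s X" "prob_reach delta p1 p2 s X \<le> 1"
proof -
  have bdd: "bdd_above (range (\<lambda>n. measure_pmf.prob (hist_pmf delta p1 p2 s n) {h. set h \<inter> X \<noteq> {}}))"
    by (intro bdd_aboveI[of _ 1]) auto
  show "0 \<le> prob_reach delta p1 p2 s X"
    unfolding prob_reach_def by (rule cSUP_upper2[OF bdd, of 0]) auto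
  show "prob_reach delta p1 p2 s X \<le> 1"
    unfolding prob_reach_def by (rule cSUP_least) auto
qed

lemma trap_val:
  fixes G1 G2 :: "'s::finite \<Rightarrow> 'm::finite set"
  assumes cgs: "cgs G1 G2 delta" and ZT: "Z \<inter> T = {}"
    and Z: "\<forall>s\<in>Z. \<exists>a2\<in>G2 s. \<forall>a1\<in>G1 s. set_pmf (delta s a1 a2) \<subseteq> Z" and s: "s \<in> Z"
  shows "val1 G1 G2 delta T s = 0"
proof -
  define g where "g s = (SOME a. a \<in> G2 s \<and> (s \<in> Z \<longrightarrow> (\<forall>a1\<in>G1 s. set_pmf (delta s a1 a) \<subseteq> Z)))" for s
  have g: "g s \<in> G2 s \<and> (s \<in> Z \<longrightarrow> (\<forall>a1\<in>G1 s. set_pmf (delta s a1 (g s)) \<subseteq> Z))" for s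
  proof -
    have "\<exists>a. a \<in> G2 s \<and> (s \<in> Z \<longrightarrow> (\<forall>a1\<in>G1 s. set_pmf (delta s a1 a) \<subseteq> Z))"
      using Z cgs unfolding cgs_def by (cases "s \<in> Z") auto
    then show ?thesis unfolding g_def by (rule someI_ex)
  qed
  define p2 where "p2 h = return_pmf (g (last h))" for h :: "'s list"
  have p2h: "p2 h = return_pmf (g (last h))" for h by (simp add: p2_def)
  have p2: "p2 \<in> strategies G2" using g by (auto simp: strategies_def p2_def)
  have zero: "prob_reach delta p1 p2 s T = 0" if p1: "p1 \<in> strategies G1" for p1
  proof -
    have inv: "h \<in> set_pmf (hist_pmf delta p1 p2 s n) \<Longrightarrow> h \<noteq> [] \<and> set h \<subseteq> Z" for n h
    proof (induction n arbitrary: h)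
      case 0 then show ?case using s by simp
    next
      case (Suc n)
      from Suc.prems have "h \<in> (\<Union>h0\<in>set_pmf (hist_pmf delta p1 p2 s n). \<Union>a1\<in>set_pmf (p1 h0). \<Union>a2\<in>set_pmf (p2 h0).
          \<Union>t\<in>set_pmf (delta (last h0) a1 a2). {h0 @ [t]})"
        by (simp only: hist_pmf.simps set_bind_pmf set_return_pmf)
      then obtain h0 a1 a2 t where h0: "h0 \<in> set_pmf (hist_pmf delta p1 p2 s n)" and a1: "a1 \<in> set_pmf (p1 h0)"
        and a2: "a2 \<in> set_pmf (p2 h0)"
        and t0: "t \<in> set_pmf (delta (last h0) a1 a2)" and h: "h = h0 @ [t]"
        by blast
      have "a2 = g (last h0)" using a2 p2h[of h0] by simp
      with t0 have t: "t \<in> set_pmf (delta (last h0) a1 (g (last h0)))" by simp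
      from Suc.IH[OF h0] have "h0 \<noteq> []" "set h0 \<subseteq> Z" by auto
      then have "last h0 \<in> Z" using last_in_set by blast
      moreover have "a1 \<in> G1 (last h0)" using p1 a1 \<open>h0 \<noteq> []\<close> by (auto simp: strategies_def)
      ultimately have "t \<in> Z" using g[of "last h0"] t by blast
      then show ?case using h \<open>set h0 \<subseteq> Z\<close> by auto
    qed
    have "measure_pmf.prob (hist_pmf delta p1 p2 s n) {h. set h \<inter> T \<noteq> {}} = 0" for n
      unfolding measure_pmf_zero_iff using inv ZT by blast
    then show ?thesis unfolding prob_reach_def by simp
  qed
  have inf0: "(INF p2 \<in> strategies G2. prob_reach delta p1 p2 s T) = 0" if "p1 \<in> strategies G1" for p1
  proof (rule antisym)
    have "bdd_below ((\<lambda>p2. prob_reach delta p1 p2 s T) ` strategies G2)"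
      by (intro bdd_belowI[of _ 0]) (auto intro: prob_reach_bounds)
    then show "(INF p2 \<in> strategies G2. prob_reach delta p1 p2 s T) \<le> 0"
      using cINF_lower[of "\<lambda>p2. prob_reach delta p1 p2 s T" "strategies G2" p2] p2 zero[OF that] by simp
    show "0 \<le> (INF p2 \<in> strategies G2. prob_reach delta p1 p2 s T)"
      using p2 by (intro cINF_greatest) (auto intro: prob_reach_bounds)
  qed
  define p1 where "p1 h = return_pmf (SOME a. a \<in> G1 (last h))" for h :: "'s list"
  have "p1 \<in> strategies G1"
    using cgs unfolding strategies_def p1_def cgs_def by (auto intro: someI_ex simp: ex_in_conv)
  then have ne: "strategies G1 \<noteq> {}" by blast
  have "val1 G1 G2 delta T s = (SUP p1 \<in> strategies G1. (0::real))"
    unfolding val1_def by (rule SUP_cong) (auto simp: inf0)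
  also have "\<dots> = 0" using ne by simp
  finally show ?thesis .
qed

lemma step_bound:
  fixes xi :: "'s \<Rightarrow> 'm::finite pmf" and c :: real
  assumes h: "h \<noteq> []" and xi: "xi (last h) = pmf_of_set (G1 (last h))" and ne: "G1 (last h) \<noteq> {}"
   and p2: "p2 \<in> strategies G2"
   and cond: "\<forall>a2\<in>G2 (last h). \<exists>a1\<in>G1 (last h). set_pmf (delta (last h) a1 a2) \<inter> A \<noteq> {}"
   and c: "\<And>a1 a2 t. t \<in> set_pmf (delta (last h) a1 a2) \<Longrightarrow> c \<le> pmf (delta (last h) a1 a2) t"
   and c0: "0 \<le> c"
  shows "ennreal (c / CARD('m)) \<le> emeasure (measure_pmf (stp delta (memoryless xi) p2 h)) {h'. last h' \<in> A}"
proof -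
  define s where "s = last h"
  have e: "stp delta (memoryless xi) p2 h = bind_pmf (p2 h) (\<lambda>a2. bind_pmf (xi s) (\<lambda>a1. map_pmf (\<lambda>t. h @ [t]) (delta s a1 a2)))"
    unfolding stp_def memoryless_def map_pmf_def s_def by (subst bind_commute_pmf) simp
  have pre: "(\<lambda>t. h @ [t]) -` {h'. last h' \<in> A} = A" by auto
  have inner: "ennreal (c / CARD('m)) \<le> (\<integral>\<^sup>+a1. emeasure (measure_pmf (delta s a1 a2)) A \<partial>measure_pmf (xi s))"
    if a2: "a2 \<in> set_pmf (p2 h)" for a2
  proof -
    have "a2 \<in> G2 s" using a2 p2 h unfolding strategies_def s_def by auto
    then obtain a1 t where a1: "a1 \<in> G1 s" and t: "t \<in> set_pmf (delta s a1 a2)" "t \<in> A"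
      using cond unfolding s_def by blast
    have fin: "finite (G1 s)" by simp
    have cardpos: "0 < card (G1 s)" using ne fin unfolding s_def by (simp add: card_gt_0_iff)
    have cardle: "card (G1 s) \<le> CARD('m)" by (rule card_mono) auto
    have "ennreal (c / CARD('m)) \<le> ennreal (c / card (G1 s))"
      using cardpos cardle c0 by (intro ennreal_leI divide_left_mono) auto
    also have "\<dots> = ennreal c * ennreal (pmf (xi s) a1)"
      using xi a1 ne c0 unfolding s_def by (simp add: ennreal_mult[symmetric])
    also have "\<dots> \<le> emeasure (measure_pmf (delta s a1 a2)) A * emeasure (measure_pmf (xi s)) {a1}"
    proof (intro mult_mono)
      have "ennreal c \<le> ennreal (pmf (delta s a1 a2) t)" using c[of t a1 a2] t unfolding s_def by (simp add: ennreal_leI)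
      also have "\<dots> = emeasure (measure_pmf (delta s a1 a2)) {t}" by (simp add: emeasure_pmf_single)
      also have "\<dots> \<le> emeasure (measure_pmf (delta s a1 a2)) A" using t by (intro emeasure_mono) auto
      finally show "ennreal c \<le> emeasure (measure_pmf (delta s a1 a2)) A" .
    qed (auto simp: emeasure_pmf_single)
    also have "\<dots> = (\<integral>\<^sup>+a1'. emeasure (measure_pmf (delta s a1 a2)) A * indicator {a1} a1' \<partial>measure_pmf (xi s))"
      by (simp add: nn_integral_cmult_indicator)
    also have "\<dots> \<le> (\<integral>\<^sup>+a1'. emeasure (measure_pmf (delta s a1' a2)) A \<partial>measure_pmf (xi s))"
      by (intro nn_integral_mono) (auto split: split_indicator)
    finally show ?thesis .
  qed
  have "ennreal (c / CARD('m)) = (\<integral>\<^sup>+a2. ennreal (c / CARD('m)) \<partial>measure_pmf (p2 h))"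
    by simp
  also have "\<dots> \<le> (\<integral>\<^sup>+a2. (\<integral>\<^sup>+a1. emeasure (measure_pmf (delta s a1 a2)) A \<partial>measure_pmf (xi s)) \<partial>measure_pmf (p2 h))"
    using inner by (intro nn_integral_mono_AE) (simp add: AE_measure_pmf_iff)
  also have "\<dots> = emeasure (measure_pmf (stp delta (memoryless xi) p2 h)) {h'. last h' \<in> A}"
    unfolding e by (simp add: emeasure_map_pmf pre)
  finally show ?thesis .
qed

theorem lemma2:
  fixes G1 G2 :: "'s::finite \<Rightarrow> 'm::finite set"
    and delta :: "'s \<Rightarrow> 'm \<Rightarrow> 'm \<Rightarrow> 's pmf"
    and T :: "'s set"
    and \<xi> :: "'s \<Rightarrow> 'm pmf"
  assumes "cgs G1 G2 delta"
    and "\<forall>s \<in> T \<union> W2 G1 G2 delta T. absorbing G1 G2 delta s"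
    and "selector G1 \<xi>"
    and "\<forall>s. s \<notin> T \<union> W2 G1 G2 delta T \<longrightarrow> \<xi> s = pmf_of_set (G1 s)"
  shows "proper_selector G1 G2 delta T \<xi>"
proof -
  define X where "X = T \<union> W2 G1 G2 delta T"
  have cgs: "cgs G1 G2 delta" by fact
  have xi: "\<And>s. s \<notin> X \<Longrightarrow> \<xi> s = pmf_of_set (G1 s)" using assms(4) unfolding X_def by blast
  define C where "C = {pmf (delta s a1 a2) t | s a1 a2 t. t \<in> set_pmf (delta s a1 a2)}"
  have "C \<subseteq> (\<lambda>(s, a1, a2, t). pmf (delta s a1 a2) t) ` UNIV"
  proof
    fix x assume "x \<in> C"
    then obtain s a1 a2 t where "x = pmf (delta s a1 a2) t" unfolding C_def by blast
    then show "x \<in> (\<lambda>(s, a1, a2, t). pmf (delta s a1 a2) t) ` UNIV"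
      by (intro image_eqI[of _ _ "(s, a1, a2, t)"]) auto
  qed
  then have finC: "finite C" by (rule finite_subset) simp
  obtain t0 where "t0 \<in> set_pmf (delta undefined undefined undefined)"
    using set_pmf_not_empty[of "delta undefined undefined undefined"] by blast
  then have neC: "C \<noteq> {}" unfolding C_def by blast
  define c where "c = Min C"
  have cle: "c \<le> pmf (delta s a1 a2) t" if "t \<in> set_pmf (delta s a1 a2)" for s a1 a2 t
    unfolding c_def using finC that by (intro Min_le) (auto simp: C_def)
  have cpos: "0 < c"
  proof -
    have "c \<in> C" unfolding c_def using finC neC by (rule Min_in)
    then obtain s a1 a2 t where "c = pmf (delta s a1 a2) t" "t \<in> set_pmf (delta s a1 a2)" unfolding C_def by blast
    then show ?thesis using pmf_positive by simp
  qed
  have c1: "c \<le> 1"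
  proof -
    have "c \<le> pmf (delta undefined undefined undefined) t0" by (rule cle) fact
    also have "\<dots> \<le> 1" by (rule pmf_le_1)
    finally show ?thesis .
  qed
  define q where "q = c / real CARD('m)"
  have card1: "1 \<le> real CARD('m)" by simp
  have qpos: "0 < q" unfolding q_def using cpos by simp
  have q1: "q \<le> 1"
  proof -
    have "c / real CARD('m) \<le> c / 1" using cpos card1 by (intro divide_left_mono) auto
    then show ?thesis unfolding q_def using c1 by linarith
  qed
  have trap: "Z = {}" if ZX: "Z \<inter> X = {}" and Z: "\<forall>s\<in>Z. \<exists>a2\<in>G2 s. \<forall>a1\<in>G1 s. set_pmf (delta s a1 a2) \<subseteq> Z" for Z
  proof (rule ccontr)
    assume "Z \<noteq> {}"
    then obtain z where z: "z \<in> Z" by blast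
    have "Z \<inter> T = {}" using ZX unfolding X_def by blast
    from trap_val[OF cgs this Z z] have "z \<in> W2 G1 G2 delta T" by (simp add: W2_def)
    then show False using ZX z unfolding X_def by blast
  qed
  have attN: "Att G1 G2 delta X (CARD('s)) = UNIV" by (rule Att_full) (rule trap)
  show ?thesis
    unfolding proper_selector_def proper_strategy_def X_def[symmetric]
  proof (intro ballI allI impI)
    fix p2 s assume p2: "p2 \<in> strategies G2" and sX: "s \<notin> X"
    let ?p1 = "memoryless \<xi>"
    let ?N = "CARD('s)"
    let ?r = "q ^ ?N"
    have r0: "0 < ?r" "?r \<le> 1" using qpos q1 by (auto simp: power_le_one)
    have A: "ennreal ?r \<le> emeasure (measure_pmf (hfrom delta ?p1 p2 h ?N)) (Hit X)" if "h \<noteq> []" for h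
    proof (rule lemA[of "Att G1 G2 delta X" X q])
      show "Att G1 G2 delta X 0 = X" by simp
      show "0 \<le> q" "q \<le> 1" using qpos q1 by auto
      show "h \<noteq> []" by fact
      show "last h \<in> Att G1 G2 delta X ?N" using attN by simp
    next
      fix h :: "'s list" and k
      assume h: "h \<noteq> []" and hk: "last h \<in> Att G1 G2 delta X (Suc k)" and hX: "last h \<notin> X"
      have cond: "\<forall>a2\<in>G2 (last h). \<exists>a1\<in>G1 (last h). set_pmf (delta (last h) a1 a2) \<inter> Att G1 G2 delta X k \<noteq> {}"
        using hk hX by simp
      have neG: "G1 (last h) \<noteq> {}" using cgs by (simp add: cgs_def)
      have c0: "0 \<le> c" using cpos by simp
      show "ennreal q \<le> emeasure (measure_pmf (stp delta ?p1 p2 h)) {h'. last h' \<in> Att G1 G2 delta X k}"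
        unfolding q_def
        by (rule step_bound[where h=h and xi=\<xi> and ?G1.0=G1 and ?G2.0=G2 and ?p2.0=p2 and delta=delta and A="Att G1 G2 delta X k" and c=c])
           (use h xi[OF hX] neG p2 cond cle c0 in auto)
    qed
    define P where "P n = measure_pmf.prob (hist_pmf delta ?p1 p2 s n) {h. set h \<inter> X \<noteq> {}}" for n
    have P: "P n = measure_pmf.prob (hfrom delta ?p1 p2 [s] n) (Hit X)" for n
      unfolding P_def hist_eq Hit_def ..
    have lowP: "1 - (1 - ?r) ^ j \<le> P (j * ?N)" for j
    proof -
      let ?M = "hfrom delta ?p1 p2 [s] (j * ?N)"
      have "emeasure (measure_pmf ?M) (- Hit X) \<le> ennreal ((1 - ?r) ^ j)"
        by (rule lemB[of ?r delta ?p1 p2 ?N X "[s]" j]) (use r0 A in auto)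
      then have "measure_pmf.prob ?M (- Hit X) \<le> (1 - ?r) ^ j"
        using r0 by (simp add: measure_pmf.emeasure_eq_measure ennreal_le_iff)
      moreover have "measure_pmf.prob ?M (- Hit X) = 1 - measure_pmf.prob ?M (Hit X)"
        using measure_pmf.prob_compl[of "Hit X" ?M] by (simp add: Compl_eq_Diff_UNIV)
      ultimately show ?thesis unfolding P by simp
    qed
    have bdd: "bdd_above (range P)" unfolding P_def by (intro bdd_aboveI[of _ 1]) auto
    have "prob_reach delta ?p1 p2 s X = (SUP n. P n)" unfolding prob_reach_def P_def ..
    also have "\<dots> = 1"
    proof (rule antisym)
      show "(SUP n. P n) \<le> 1" unfolding P_def by (rule cSUP_least) auto
      have lim: "(\<lambda>j. 1 - (1 - ?r) ^ j) \<longlonglongrightarrow> 1 - 0"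
        using r0 by (intro tendsto_diff tendsto_const LIMSEQ_power_zero) auto
      show "1 \<le> (SUP n. P n)"
        using LIMSEQ_le_const2[OF lim[simplified]] cSUP_upper2[OF bdd UNIV_I lowP] by blast
    qed
    finally show "prob_reach delta ?p1 p2 s X = 1" .
  qed
qed

end
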